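(* With notation as below, for all $M\ge1$, $0\le N\le M-1$, all $1\le x_1<\cdots<x_N\le M$, all $1\le y_1<\cdots<y_{N+1}\le M$ and all nonzero $u\in\mathbb{C}$, $$\langle x^\vee_1\cdots x^\vee_N|\,C(u)\,|y^\vee_1\cdots y^\vee_{N+1}\rangle=\langle y_1\cdots y_{N+1}|\,B(u)\,|x_1\cdots x_N\rangle,$$ where $x^\vee_j=M+1-x_{N+1-j}$ and $y^\vee_j=M+1-y_{N+2-j}$. Consequently, if $x_j=\lambda_{N-j+1}+j$, $y_j=\mu_{N-j+2}+j$ for integer sequences $M-N\ge\lambda_1\ge\cdots\ge\lambda_N\ge0$, $M-N-1\ge\mu_1\ge\cdots\ge\mu_{N+1}\ge0$, and $z=-\beta^{-1}-u^{-2}$, then $$(-\beta)^Nu^{1-M}\langle x_1\cdots x_N|C(u)|y_1\cdots y_{N+1}\rangle=G_{\mu^\vee/\lambda^\vee}(z;\beta),$$ with $\lambda^\vee_j=M-N-\lambda_{N+1-j}$, $\mu^\vee_j=M-N-1-\mu_{N+2-j}$.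
   Context: Fix nonzero $\beta\in\mathbb{C}$. Let $W_a=V_j=\mathbb{C}^2$ with basis $|0\rangle=(1,0)^T$, $|1\rangle=(0,1)^T$; $s=|0\rangle\langle0|$, $n=|1\rangle\langle1|$, $\sigma^+=|0\rangle\langle1|$, $\sigma^-=|1\rangle\langle0|$, subscripts indicating the tensor factor. $L_{aj}(u)=u\,s_as_j+\sigma_a^-\sigma_j^++\sigma_a^+\sigma_j^-+(-\beta^{-1}u-u^{-1})n_as_j-\beta^{-1}u\,n_an_j$ on $W_a\otimes V_j$; $T_a(u)=L_{aM}(u)\cdots L_{a1}(u)$ on $W_a\otimes V_1\otimes\cdots\otimes V_M$; $B(u)={}_a\langle0|T_a(u)|1\rangle_a$ and $C(u)={}_a\langle1|T_a(u)|0\rangle_a$. $|x_1\cdots x_N\rangle$ ($x_1<\cdots<x_N$) is the basis vector with $|1\rangle$ at the factors $x_j$ and $|0\rangle$ elsewhere; $\langle x_1\cdots x_N|$ is the dual basis vector. For a sequence $\mu$ with $N+1$ entries and $\lambda$ with $N$ entries, $G_{\mu/\lambda}(z;\beta)=z^{|\mu|-|\lambda|}\prod_{j=1}^N(1+\beta z-\beta z\,\delta_{\mu_{j+1},\lambda_j})$ if $\mu_j\ge\lambda_j\ge\mu_{j+1}$ for all $1\le j\le N$, and $0$ otherwise, where $|\lambda|=\sum\lambda_j$. *)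

theory Defs
  imports Complex_Main
begin

text \<open>Local basis states are encoded as booleans: False = |0>, True = |1>.
  Lent beta u a a' j j' is the matrix entry <a|_a <j|_j L_aj(u) |a'>_a |j'>_j.\<close>

definition Lent :: "complex \<Rightarrow> complex \<Rightarrow> bool \<Rightarrow> bool \<Rightarrow> bool \<Rightarrow> bool \<Rightarrow> complex" where
  "Lent beta u a a' j j' =
     (if \<not> a \<and> \<not> j \<and> \<not> a' \<and> \<not> j' then u
      else if a \<and> \<not> j \<and> \<not> a' \<and> j' then 1
      else if \<not> a \<and> j \<and> a' \<and> \<not> j' then 1
      else if a \<and> \<not> j \<and> a' \<and> \<not> j' then - u / beta - inverse u
      else if a \<and> j \<and> a' \<and> j' then - u / beta
      else 0)"

text \<open>Tm beta u k X Y a a' = <a|_a <X| L_{ak}(u) ... L_{a1}(u) |a'>_a |Y>, restricted to sites 1..k;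
  X, Y are the sets of sites carrying |1>.\<close>

fun Tm :: "complex \<Rightarrow> complex \<Rightarrow> nat \<Rightarrow> nat set \<Rightarrow> nat set \<Rightarrow> bool \<Rightarrow> bool \<Rightarrow> complex" where
  "Tm beta u 0 X Y a a' = (if a = a' then 1 else 0)"
| "Tm beta u (Suc k) X Y a a' =
     (\<Sum>b\<in>UNIV. Lent beta u a b (Suc k \<in> X) (Suc k \<in> Y) * Tm beta u k X Y b a')"

definition Bel :: "complex \<Rightarrow> nat \<Rightarrow> complex \<Rightarrow> nat set \<Rightarrow> nat set \<Rightarrow> complex" where
  "Bel beta M u X Y = Tm beta u M X Y False True"

definition Cel :: "complex \<Rightarrow> nat \<Rightarrow> complex \<Rightarrow> nat set \<Rightarrow> nat set \<Rightarrow> complex" where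
  "Cel beta M u X Y = Tm beta u M X Y True False"

definition Gfun :: "nat \<Rightarrow> (nat \<Rightarrow> int) \<Rightarrow> (nat \<Rightarrow> int) \<Rightarrow> complex \<Rightarrow> complex \<Rightarrow> complex" where
  "Gfun N mu lam z beta =
     (if (\<forall>j\<in>{1..N}. mu j \<ge> lam j \<and> lam j \<ge> mu (j+1))
      then z powi ((\<Sum>j=1..N+1. mu j) - (\<Sum>j=1..N. lam j)) *
           (\<Prod>j=1..N. 1 + beta * z - beta * z * (if mu (j+1) = lam j then 1 else 0))
      else 0)"

end

theory Submission
  imports Defs
begin


lemma Lent_sym: "Lent beta u a b j j' = Lent beta u b a j' j"
  by (cases a; cases b; cases j; cases j'; simp add: Lent_def)

fun Tg :: "complex \<Rightarrow> complex \<Rightarrow> (nat \<Rightarrow> bool) \<Rightarrow> (nat \<Rightarrow> bool) \<Rightarrow> nat \<Rightarrow> bool \<Rightarrow> bool \<Rightarrow> complex" where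
  "Tg beta u f g 0 a a' = (if a = a' then 1 else 0)"
| "Tg beta u f g (Suc k) a a' =
     (\<Sum>b\<in>UNIV. Lent beta u a b (f (Suc k)) (g (Suc k)) * Tg beta u f g k b a')"

lemma Tm_Tg: "Tm beta u k X Y a a' = Tg beta u (\<lambda>i. i \<in> X) (\<lambda>i. i \<in> Y) k a a'"
  by (induction k arbitrary: a) auto

lemma Tg_cong: "(\<forall>i\<in>{1..k}. f i = f' i \<and> g i = g' i) \<Longrightarrow> Tg beta u f g k a a' = Tg beta u f' g' k a a'"
proof (induction k arbitrary: a)
  case 0 then show ?case by simp
next
  case (Suc k)
  have "\<forall>i\<in>{1..k}. f i = f' i \<and> g i = g' i" using Suc.prems by auto
  then show ?case using Suc.prems Suc.IH by simp
qed

lemma Tg_peel: "Tg beta u f g (Suc k) a a' =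
   (\<Sum>c\<in>UNIV. Tg beta u (\<lambda>i. f (Suc i)) (\<lambda>i. g (Suc i)) k a c * Lent beta u c a' (f 1) (g 1))"
proof (induction k arbitrary: a)
  case 0 then show ?case by (simp add: UNIV_bool)
next
  case (Suc k)
  have "Tg beta u f g (Suc (Suc k)) a a' =
     (\<Sum>b\<in>UNIV. Lent beta u a b (f (Suc (Suc k))) (g (Suc (Suc k))) *
        (\<Sum>c\<in>UNIV. Tg beta u (\<lambda>i. f (Suc i)) (\<lambda>i. g (Suc i)) k b c * Lent beta u c a' (f 1) (g 1)))"
    by (subst Tg.simps(2)) (simp only: Suc.IH)
  also have "\<dots> = (\<Sum>c\<in>UNIV. Tg beta u (\<lambda>i. f (Suc i)) (\<lambda>i. g (Suc i)) (Suc k) a c * Lent beta u c a' (f 1) (g 1))"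
    by (simp add: UNIV_bool algebra_simps)
  finally show ?case .
qed

lemma Tg_rev: "Tg beta u f g k a a' = Tg beta u (\<lambda>i. g (k+1-i)) (\<lambda>i. f (k+1-i)) k a' a"
proof (induction k arbitrary: a)
  case 0 then show ?case by simp
next
  case (Suc k)
  have "Tg beta u (\<lambda>i. g (Suc k+1-i)) (\<lambda>i. f (Suc k+1-i)) (Suc k) a' a =
    (\<Sum>c\<in>UNIV. Tg beta u (\<lambda>i. g (k+1-i)) (\<lambda>i. f (k+1-i)) k a' c * Lent beta u c a (g (Suc k)) (f (Suc k)))"
    by (subst Tg_peel) simp
  also have "\<dots> = Tg beta u f g (Suc k) a a'"
    by (subst Tg.simps(2), rule sum.cong[OF refl]) (metis Suc.IH Lent_sym mult.commute add.commute plus_1_eq_Suc)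
  finally show ?case by simp
qed

lemma part1:
  fixes x y :: "nat \<Rightarrow> nat"
  assumes xb: "\<forall>j\<in>{1..N}. 1 \<le> x j \<and> x j \<le> M" and yb: "\<forall>j\<in>{1..N+1}. 1 \<le> y j \<and> y j \<le> M"
  shows "Cel beta M u ((\<lambda>j. M + 1 - x (N + 1 - j)) ` {1..N})
                    ((\<lambda>j. M + 1 - y (N + 2 - j)) ` {1..N+1})
       = Bel beta M u (y ` {1..N+1}) (x ` {1..N})"
proof -
  let ?P = "(\<lambda>j. M + 1 - x (N + 1 - j)) ` {1..N}"
  let ?Q = "(\<lambda>j. M + 1 - y (N + 2 - j)) ` {1..N+1}"
  have hx: "(M + 1 - i \<in> ?P) = (i \<in> x ` {1..N})" if "i \<in> {1..M}" for i
  proof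
    assume "M + 1 - i \<in> ?P"
    then obtain j where j: "j \<in> {1..N}" "M + 1 - i = M + 1 - x (N + 1 - j)" by auto
    have "N+1-j \<in> {1..N}" using j by auto
    moreover have "i = x (N+1-j)" using j that xb \<open>N+1-j \<in> {1..N}\<close> by fastforce
    ultimately show "i \<in> x ` {1..N}" by auto
  next
    assume "i \<in> x ` {1..N}"
    then obtain k where k: "k \<in> {1..N}" "i = x k" by auto
    have "N+1-k \<in> {1..N}" "N + 1 - (N+1-k) = k" using k by auto
    then show "M + 1 - i \<in> ?P" using k by (metis image_eqI)
  qed
  have hy: "(M + 1 - i \<in> ?Q) = (i \<in> y ` {1..N+1})" if "i \<in> {1..M}" for i
  proof
    assume "M + 1 - i \<in> ?Q"
    then obtain j where j: "j \<in> {1..N+1}" "M + 1 - i = M + 1 - y (N + 2 - j)" by auto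
    have "N+2-j \<in> {1..N+1}" using j by auto
    moreover have "i = y (N+2-j)" using j that yb \<open>N+2-j \<in> {1..N+1}\<close> by fastforce
    ultimately show "i \<in> y ` {1..N+1}" by auto
  next
    assume "i \<in> y ` {1..N+1}"
    then obtain k where k: "k \<in> {1..N+1}" "i = y k" by auto
    have "N+2-k \<in> {1..N+1}" "N + 2 - (N+2-k) = k" using k by auto
    then show "M + 1 - i \<in> ?Q" using k by (metis image_eqI)
  qed
  have "Cel beta M u ?P ?Q = Tg beta u (\<lambda>i. i \<in> ?P) (\<lambda>i. i \<in> ?Q) M True False"
    by (simp add: Cel_def Tm_Tg)
  also have "\<dots> = Tg beta u (\<lambda>i. M+1-i \<in> ?Q) (\<lambda>i. M+1-i \<in> ?P) M False True"
    by (rule Tg_rev)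
  also have "\<dots> = Tg beta u (\<lambda>i. i \<in> y ` {1..N+1}) (\<lambda>i. i \<in> x ` {1..N}) M False True"
    by (rule Tg_cong) (use hx hy in blast)
  also have "\<dots> = Bel beta M u (y ` {1..N+1}) (x ` {1..N})"
    by (simp add: Bel_def Tm_Tg)
  finally show ?thesis .
qed



definition allowed :: "bool \<Rightarrow> bool \<Rightarrow> bool \<Rightarrow> bool \<Rightarrow> bool" where
  "allowed a b j j' \<longleftrightarrow> (\<not>a\<and>\<not>b\<and>\<not>j\<and>\<not>j') \<or> (a\<and>\<not>b\<and>\<not>j\<and>j') \<or> (\<not>a\<and>b\<and>j\<and>\<not>j') \<or> (a\<and>b\<and>(j\<longleftrightarrow>j'))"

lemma Lent_allowed: "Lent beta u a b j j' \<noteq> 0 \<Longrightarrow> allowed a b j j'"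
  by (cases a; cases b; cases j; cases j'; simp add: Lent_def allowed_def)

lemma Lent_unique: "allowed a b j j' \<Longrightarrow> c \<noteq> b \<Longrightarrow> Lent beta u a c j j' = 0"
  by (cases a; cases b; cases c; cases j; cases j'; simp add: Lent_def allowed_def)

lemma allowed_int: "allowed a b j j' \<Longrightarrow> (of_bool a :: int) = of_bool b + of_bool j' - of_bool j"
  by (cases a; cases b; cases j; cases j'; simp add: allowed_def)

lemma path_val:
  assumes "p 0 = False" "\<forall>i\<in>{1..k}. allowed (p i) (p (i-1)) (i\<in>X) (i\<in>Y)"
  shows "Tm beta u k X Y (p k) False = (\<Prod>i=1..k. Lent beta u (p i) (p (i-1)) (i\<in>X) (i\<in>Y))"
  using assms(2)
proof (induction k)
  case 0 then show ?case using assms(1) by simp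
next
  case (Suc k)
  have al: "allowed (p (Suc k)) (p k) (Suc k\<in>X) (Suc k\<in>Y)" using Suc.prems by force
  have ih: "Tm beta u k X Y (p k) False = (\<Prod>i=1..k. Lent beta u (p i) (p (i-1)) (i\<in>X) (i\<in>Y))"
    using Suc.prems by (intro Suc.IH) auto
  have z: "Lent beta u (p (Suc k)) (\<not> p k) (Suc k\<in>X) (Suc k\<in>Y) = 0"
    using Lent_unique[OF al] by simp
  have "Tm beta u (Suc k) X Y (p (Suc k)) False = Lent beta u (p (Suc k)) (p k) (Suc k\<in>X) (Suc k\<in>Y) * Tm beta u k X Y (p k) False"
    using z by (cases "p k") (simp_all add: UNIV_bool)
  then show ?case using ih by (simp add: prod.nat_ivl_Suc' mult.commute)
qed

lemma path_exists:
  "Tm beta u k X Y a False \<noteq> 0 \<Longrightarrow> \<exists>p. p 0 = False \<and> p k = a \<and> (\<forall>i\<in>{1..k}. allowed (p i) (p (i-1)) (i\<in>X) (i\<in>Y))"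
proof (induction k arbitrary: a)
  case 0 then have "a = False" by (simp split: if_splits)
  then show ?case by (intro exI[of _ "\<lambda>_. False"]) simp
next
  case (Suc k)
  obtain c where c: "Lent beta u a c (Suc k\<in>X) (Suc k\<in>Y) \<noteq> 0" "Tm beta u k X Y c False \<noteq> 0"
  proof -
    have "Lent beta u a False (Suc k\<in>X) (Suc k\<in>Y) * Tm beta u k X Y False False
        + Lent beta u a True (Suc k\<in>X) (Suc k\<in>Y) * Tm beta u k X Y True False \<noteq> 0"
      using Suc.prems by (simp add: UNIV_bool)
    then have "Lent beta u a False (Suc k\<in>X) (Suc k\<in>Y) * Tm beta u k X Y False False \<noteq> 0 \<or>
       Lent beta u a True (Suc k\<in>X) (Suc k\<in>Y) * Tm beta u k X Y True False \<noteq> 0" by auto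
    then show ?thesis using that by auto
  qed
  obtain p where p: "p 0 = False" "p k = c" "\<forall>i\<in>{1..k}. allowed (p i) (p (i-1)) (i\<in>X) (i\<in>Y)"
    using Suc.IH[OF c(2)] by blast
  let ?q = "p(Suc k := a)"
  have "\<forall>i\<in>{1..Suc k}. allowed (?q i) (?q (i-1)) (i\<in>X) (i\<in>Y)"
  proof
    fix i assume i: "i \<in> {1..Suc k}"
    show "allowed (?q i) (?q (i-1)) (i\<in>X) (i\<in>Y)"
    proof (cases "i = Suc k")
      case True then show ?thesis using Lent_allowed[OF c(1)] p(2) by simp
    next
      case False then show ?thesis using i p(3) by auto
    qed
  qed
  moreover have "?q 0 = False" "?q (Suc k) = a" using p by auto
  ultimately show ?case by blast
qed

lemma path_D:
  fixes i :: nat and p :: "nat \<Rightarrow> bool"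
  assumes "p 0 = False" "\<forall>i\<in>{1..k}. allowed (p i) (p (i-1)) (i\<in>X) (i\<in>Y)"
  shows "i \<le> k \<Longrightarrow> (of_bool (p i) :: int) = int (card (Y \<inter> {1..i})) - int (card (X \<inter> {1..i}))"
proof (induction i)
  case 0 then show ?case using assms(1) by simp
next
  case (Suc i)
  have si: "Suc i \<in> {1..k}" using Suc.prems by simp
  have al: "allowed (p (Suc i)) (p i) (Suc i\<in>X) (Suc i\<in>Y)" using bspec[OF assms(2) si] by simp
  have c: "card (Z \<inter> {1..Suc i}) = card (Z \<inter> {1..i}) + of_bool (Suc i \<in> Z)" for Z :: "nat set"
  proof -
    have "Z \<inter> {1..Suc i} = (if Suc i \<in> Z then insert (Suc i) (Z \<inter> {1..i}) else Z \<inter> {1..i})"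
      by (auto simp: le_Suc_eq)
    then show ?thesis by simp
  qed
  show ?case using allowed_int[OF al] Suc.IH Suc.prems c[of X] c[of Y] by simp
qed

lemma smono_lt:
  fixes f :: "nat \<Rightarrow> nat"
  assumes "\<forall>j\<in>{1..<n}. f j < f (j+1)" "1 \<le> a" "a < b" "b \<le> n"
  shows "f a < f b"
proof -
  have H: "a + Suc d \<le> n \<Longrightarrow> f a < f (a + Suc d)" for d
  proof (induction d)
    case 0 then show ?case using assms by auto
  next
    case (Suc d)
    have "f (a + Suc d) < f (a + Suc d + 1)" using assms Suc.prems by auto
    then show ?case using Suc by simp
  qed
  have e: "b = a + Suc (b - a - 1)" using assms by simp
  have "f a < f (a + Suc (b - a - 1))" by (rule H) (use assms in simp)
  then show ?thesis using e by simp
qed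

lemma smono_le_iff:
  fixes f :: "nat \<Rightarrow> nat"
  assumes "\<forall>j\<in>{1..<n}. f j < f (j+1)" "a \<in> {1..n}" "b \<in> {1..n}"
  shows "f a \<le> f b \<longleftrightarrow> a \<le> b" "f a < f b \<longleftrightarrow> a < b" "f a = f b \<longleftrightarrow> a = b"
proof -
  have h1: "a < b \<Longrightarrow> f a < f b" using smono_lt[OF assms(1), of a b] assms(2,3) by auto
  have h2: "b < a \<Longrightarrow> f b < f a" using smono_lt[OF assms(1), of b a] assms(2,3) by auto
  show "f a \<le> f b \<longleftrightarrow> a \<le> b" using h1 h2 by (cases a b rule: linorder_cases) auto
  show "f a < f b \<longleftrightarrow> a < b" using h1 h2 by (cases a b rule: linorder_cases) auto
  show "f a = f b \<longleftrightarrow> a = b" using h1 h2 by (cases a b rule: linorder_cases) auto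
qed

lemma card_below:
  fixes f :: "nat \<Rightarrow> nat"
  assumes "\<forall>j\<in>{1..<n}. f j < f (j+1)" "\<forall>j\<in>{1..n}. 1 \<le> f j"
  shows "card (f ` {1..n} \<inter> {1..i}) = card {j\<in>{1..n}. f j \<le> i}"
proof -
  have inj: "inj_on f {1..n}" using smono_le_iff(3)[OF assms(1)] by (auto simp: inj_on_def)
  have "f ` {1..n} \<inter> {1..i} = f ` {j\<in>{1..n}. f j \<le> i}" using assms(2) by auto
  moreover have "card (f ` {j\<in>{1..n}. f j \<le> i}) = card {j\<in>{1..n}. f j \<le> i}"
    by (rule card_image[OF inj_on_subset[OF inj]]) auto
  ultimately show ?thesis by simp
qed



lemma card_Int_Suc: "card (Z \<inter> {1..Suc i}) = card (Z \<inter> {1..i}) + of_bool (Suc i \<in> Z)"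
proof -
  have "Z \<inter> {1..Suc i} = (if Suc i \<in> Z then insert (Suc i) (Z \<inter> {1..i}) else Z \<inter> {1..i})"
    by (auto simp: le_Suc_eq)
  then show ?thesis by simp
qed

lemma prod_if_one: "finite S \<Longrightarrow> (\<Prod>i\<in>S. if P i then (c::'a::comm_monoid_mult) else 1) = c ^ card {i\<in>S. P i}"
proof -
  assume "finite S"
  then have "(\<Prod>i\<in>S. if P i then c else 1) = (\<Prod>i\<in>S \<inter> {i. P i}. c) * (\<Prod>i\<in>S \<inter> - {i. P i}. 1)"
    by (rule prod.If_cases)
  moreover have "S \<inter> {i. P i} = {i\<in>S. P i}" by auto
  ultimately show ?thesis by simp
qed

lemma sum_card_below:
  fixes f :: "nat \<Rightarrow> nat"
  assumes "finite J" "\<forall>j\<in>J. 1 \<le> f j \<and> f j \<le> M"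
  shows "(\<Sum>i\<in>{1..M}. card {j\<in>J. f j \<le> i}) = (\<Sum>j\<in>J. M + 1 - f j)"
proof (rule sum_multicount_gen)
  show "\<forall>j\<in>J. card {i \<in> {1..M}. f j \<le> i} = M + 1 - f j"
  proof
    fix j assume "j \<in> J"
    then have "{i \<in> {1..M}. f j \<le> i} = {f j..M}" using assms(2) by auto
    then show "card {i \<in> {1..M}. f j \<le> i} = M + 1 - f j" by simp
  qed
qed (use assms in auto)

lemma Lent_decomp:
  assumes "allowed a b j j'" "u \<noteq> 0"
  shows "Lent beta u a b j j' = (if j \<and> j' then - u / beta else 1) * (if \<not>j \<and> \<not>j' then u else 1)
           * (if \<not>j \<and> \<not>j' \<and> a then - inverse beta - inverse (u^2) else 1)"
proof -
  have key: "- (u / beta) - inverse u = u * (- inverse beta - inverse (u^2))"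
    using assms(2) by (simp add: right_diff_distrib power2_eq_square divide_inverse)
  show ?thesis using assms(1)
    apply (cases a; cases b; cases j; cases j'; simp add: Lent_def allowed_def)
    by (rule key)
qed



lemma core_zero:
  fixes x y :: "nat \<Rightarrow> nat"
  assumes xm: "\<forall>j\<in>{1..<N}. x j < x (j+1)" and ym: "\<forall>j\<in>{1..<N+1}. y j < y (j+1)"
    and xb: "\<forall>j\<in>{1..N}. 1 \<le> x j \<and> x j \<le> M" and yb: "\<forall>j\<in>{1..N+1}. 1 \<le> y j \<and> y j \<le> M"
    and nil: "\<not> (\<forall>j\<in>{1..N}. y j < x j \<and> x j \<le> y (j+1))"
  shows "Tm beta u M (x ` {1..N}) (y ` {1..N+1}) True False = 0"
proof (rule ccontr)
  let ?X = "x ` {1..N}" and ?Y = "y ` {1..N+1}"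
  assume "Tm beta u M ?X ?Y True False \<noteq> 0"
  from path_exists[OF this] obtain p where p: "p 0 = False" "p M = True" "\<forall>i\<in>{1..M}. allowed (p i) (p (i-1)) (i\<in>?X) (i\<in>?Y)"
    by blast
  have D: "(of_bool (p i) :: int) = int (card {j\<in>{1..N+1}. y j \<le> i}) - int (card {j\<in>{1..N}. x j \<le> i})"
    if "i \<le> M" for i
  proof -
    have "(of_bool (p i) :: int) = int (card (?Y \<inter> {1..i})) - int (card (?X \<inter> {1..i}))"
      by (rule path_D[OF p(1) p(3) that])
    moreover have "card (?Y \<inter> {1..i}) = card {j\<in>{1..N+1}. y j \<le> i}"
      by (rule card_below[OF ym]) (use yb in auto)
    moreover have "card (?X \<inter> {1..i}) = card {j\<in>{1..N}. x j \<le> i}"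
      by (rule card_below[OF xm]) (use xb in auto)
    ultimately show ?thesis by simp
  qed
  have fin1: "finite {j\<in>{1..N+1}. y j \<le> i}" "finite {j\<in>{1..N}. x j \<le> i}" for i by auto
  obtain j where j: "j \<in> {1..N}" "\<not> (y j < x j \<and> x j \<le> y (j+1))" using nil by blast
  have jx: "j \<in> {1..N}" and jy: "j \<in> {1..N+1}" "j+1 \<in> {1..N+1}" using j by auto
  consider "x j < y j" | "x j = y j" | "y (j+1) < x j" using j(2) by linarith
  then show False
  proof cases
    case 1
    have a: "{1..j} \<subseteq> {j'\<in>{1..N}. x j' \<le> x j}" using smono_le_iff(1)[OF xm _ jx] jx by auto
    have b: "{j'\<in>{1..N+1}. y j' \<le> x j} \<subseteq> {1..j-1}"
    proof
      fix j' assume "j' \<in> {j'\<in>{1..N+1}. y j' \<le> x j}"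
      then have "j' \<in> {1..N+1}" "y j' < y j" using 1 by auto
      then show "j' \<in> {1..j-1}" using smono_le_iff(2)[OF ym _ jy(1)] by auto
    qed
    have "card {1..j} \<le> card {j'\<in>{1..N}. x j' \<le> x j}" by (rule card_mono[OF fin1(2) a])
    moreover have "card {j'\<in>{1..N+1}. y j' \<le> x j} \<le> card {1..j-1}" by (rule card_mono[OF _ b]) auto
    ultimately show False using D[of "x j"] xb jx by (cases "p (x j)") auto
  next
    case 2
    let ?i = "x j"
    have i1: "?i \<in> {1..M}" using xb jx by auto
    have "?i \<in> ?X" "?i \<in> ?Y" using jx jy 2 by (auto intro!: image_eqI)
    then have "p (?i - 1)" using p(3) i1 by (force simp: allowed_def)
    have a: "{1..j-1} \<subseteq> {j'\<in>{1..N}. x j' \<le> ?i - 1}"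
    proof
      fix j' assume "j' \<in> {1..j-1}"
      then have "x j' < x j" "j' \<in> {1..N}" using smono_le_iff(2)[OF xm _ jx, of j'] jx by auto
      then show "j' \<in> {j'\<in>{1..N}. x j' \<le> ?i - 1}" by auto
    qed
    have b: "{j'\<in>{1..N+1}. y j' \<le> ?i - 1} \<subseteq> {1..j-1}"
    proof
      fix j' assume "j' \<in> {j'\<in>{1..N+1}. y j' \<le> ?i - 1}"
      then have "j' \<in> {1..N+1}" "y j' < y j" using 2 i1 by auto
      then show "j' \<in> {1..j-1}" using smono_le_iff(2)[OF ym _ jy(1)] by auto
    qed
    have "card {1..j-1} \<le> card {j'\<in>{1..N}. x j' \<le> ?i - 1}" by (rule card_mono[OF fin1(2) a])
    moreover have "card {j'\<in>{1..N+1}. y j' \<le> ?i - 1} \<le> card {1..j-1}" by (rule card_mono[OF _ b]) auto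
    moreover have "?i - 1 \<le> M" using i1 by auto
    ultimately show False using D[of "?i - 1"] \<open>p (?i - 1)\<close> by auto
  next
    case 3
    let ?i = "y (j+1)"
    have a: "{1..j+1} \<subseteq> {j'\<in>{1..N+1}. y j' \<le> ?i}" using smono_le_iff(1)[OF ym _ jy(2)] jy by auto
    have b: "{j'\<in>{1..N}. x j' \<le> ?i} \<subseteq> {1..j-1}"
    proof
      fix j' assume "j' \<in> {j'\<in>{1..N}. x j' \<le> ?i}"
      then have "j' \<in> {1..N}" "x j' < x j" using 3 by auto
      then show "j' \<in> {1..j-1}" using smono_le_iff(2)[OF xm _ jx] by auto
    qed
    have "card {1..j+1} \<le> card {j'\<in>{1..N+1}. y j' \<le> ?i}" by (rule card_mono[OF fin1(1) a])
    moreover have "card {j'\<in>{1..N}. x j' \<le> ?i} \<le> card {1..j-1}" by (rule card_mono[OF _ b]) auto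
    ultimately show False using D[of "?i"] yb jy by (cases "p ?i") auto
  qed
qed



lemma core_val:
  fixes x y :: "nat \<Rightarrow> nat" and u beta :: complex
  assumes xm: "\<forall>j\<in>{1..<N}. x j < x (j+1)" and ym: "\<forall>j\<in>{1..<N+1}. y j < y (j+1)"
    and xb: "\<forall>j\<in>{1..N}. 1 \<le> x j \<and> x j \<le> M" and yb: "\<forall>j\<in>{1..N+1}. 1 \<le> y j \<and> y j \<le> M"
    and il: "\<forall>j\<in>{1..N}. y j < x j \<and> x j \<le> y (j+1)" and u: "u \<noteq> 0"
  shows "\<exists>A B. A + 2*N + 1 = M + card {j\<in>{1..N}. x j = y (j+1)} \<and>
     int B + int N + (\<Sum>j\<in>{1..N+1}. int (y j)) = int M + (\<Sum>j\<in>{1..N}. int (x j)) \<and>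
     Tm beta u M (x ` {1..N}) (y ` {1..N+1}) True False =
       (- u / beta) ^ card {j\<in>{1..N}. x j = y (j+1)} * u ^ A * (- inverse beta - inverse (u^2)) ^ B"
proof -
  define X where "X = x ` {1..N}"
  define Y where "Y = y ` {1..N+1}"
  define cX where "cX i = card {j\<in>{1..N}. x j \<le> i}" for i
  define cY where "cY i = card {j\<in>{1..N+1}. y j \<le> i}" for i
  define C where "C = card {j\<in>{1..N}. x j = y (j+1)}"
  define z where "z = - inverse beta - inverse (u^2)"
  have injx: "inj_on x {1..N}" using smono_le_iff(3)[OF xm] by (auto simp: inj_on_def)
  have injy: "inj_on y {1..N+1}" using smono_le_iff(3)[OF ym] by (auto simp: inj_on_def)
  have XM: "X \<subseteq> {1..M}" using xb by (auto simp: X_def)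
  have YM: "Y \<subseteq> {1..M}" using yb by (auto simp: Y_def)
  have cXs: "card (X \<inter> {1..i}) = cX i" for i
    unfolding X_def cX_def by (rule card_below[OF xm]) (use xb in auto)
  have cYs: "card (Y \<inter> {1..i}) = cY i" for i
    unfolding Y_def cY_def by (rule card_below[OF ym]) (use yb in auto)
  have match: "k = j + 1" if "j \<in> {1..N}" "k \<in> {1..N+1}" "x j = y k" for j k
  proof -
    have j1: "j \<in> {1..N+1}" "j+1 \<in> {1..N+1}" using that by auto
    have "y j < x j" using il that(1) by auto
    then have "y j < y k" using that(3) by simp
    then have "j < k" using smono_le_iff(2)[OF ym j1(1) that(2)] by simp
    moreover have "x j \<le> y (j+1)" using il that(1) by auto
    then have "y k \<le> y (j+1)" using that(3) by simp
    then have "k \<le> j+1" using smono_le_iff(1)[OF ym that(2) j1(2)] by simp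
    ultimately show ?thesis by simp
  qed
  have F1: "cX i \<le> cY i" for i
  proof -
    have "{j\<in>{1..N}. x j \<le> i} \<subseteq> {j\<in>{1..N+1}. y j \<le> i}" using il by force
    then show ?thesis unfolding cX_def cY_def by (rule card_mono[rotated]) auto
  qed
  have F2: "cY i \<le> Suc (cX i)" for i
  proof -
    have "{j\<in>{1..N+1}. y j \<le> i} \<subseteq> insert 1 (Suc ` {j\<in>{1..N}. x j \<le> i})"
    proof
      fix j assume j: "j \<in> {j\<in>{1..N+1}. y j \<le> i}"
      show "j \<in> insert 1 (Suc ` {j\<in>{1..N}. x j \<le> i})"
      proof (cases "j = 1")
        case False
        then have "j - 1 \<in> {1..N}" "j = Suc (j - 1)" using j by auto
        moreover have "x (j-1) \<le> y j" using il \<open>j - 1 \<in> {1..N}\<close> \<open>j = Suc (j-1)\<close> by (metis Suc_eq_plus1)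
        ultimately show ?thesis using j by force
      qed simp
    qed
    then have "cY i \<le> card (insert 1 (Suc ` {j\<in>{1..N}. x j \<le> i}))" unfolding cY_def
      by (rule card_mono[rotated]) auto
    also have "\<dots> \<le> Suc (card (Suc ` {j\<in>{1..N}. x j \<le> i}))" by (simp add: card_insert_if)
    also have "\<dots> = Suc (cX i)" unfolding cX_def by (simp add: card_image)
    finally show ?thesis .
  qed
  define p where "p i = (cX i < cY i)" for i
  have p0: "p 0 = False"
  proof -
    have e: "{j\<in>{1..N+1}. y j \<le> 0} = {}" using yb by force
    show ?thesis unfolding p_def cY_def e by simp
  qed
  have pM: "p M = True"
  proof -
    have e: "{j\<in>{1..N+1}. y j \<le> M} = {1..N+1}" "{j\<in>{1..N}. x j \<le> M} = {1..N}" using xb yb by auto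
    show ?thesis unfolding p_def cY_def cX_def e by simp
  qed
  have common: "p i" if iX: "i \<in> X" and iY: "i \<in> Y" for i
  proof -
    obtain j where j: "j \<in> {1..N}" "i = x j" using iX unfolding X_def by blast
    obtain k where k: "k \<in> {1..N+1}" "i = y k" using iY unfolding Y_def by blast
    have jk: "j \<in> {1..N}" "k \<in> {1..N+1}" "i = x j" "i = y k" using j k by auto
    have k: "k = j + 1" using match jk by simp
    have j1: "j+1 \<in> {1..N+1}" using jk by auto
    have "{j'\<in>{1..N}. x j' \<le> i} = {1..j}"
      using smono_le_iff(1)[OF xm _ jk(1)] jk by auto
    moreover have "{j'\<in>{1..N+1}. y j' \<le> i} = {1..j+1}"
      using smono_le_iff(1)[OF ym _ j1] jk k by auto
    ultimately show ?thesis unfolding p_def cX_def cY_def by simp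
  qed
  have allowed_all: "\<forall>i\<in>{1..M}. allowed (p i) (p (i-1)) (i\<in>X) (i\<in>Y)"
  proof
    fix i assume i: "i \<in> {1..M}"
    then obtain i' where i': "i = Suc i'" by (cases i) auto
    have incX: "cX (Suc i') = cX i' + of_bool (Suc i' \<in> X)" using card_Int_Suc[of X i'] cXs by simp
    have incY: "cY (Suc i') = cY i' + of_bool (Suc i' \<in> Y)" using card_Int_Suc[of Y i'] cYs by simp
    have f: "cX i' \<le> cY i'" "cY i' \<le> Suc (cX i')" "cX (Suc i') \<le> cY (Suc i')" "cY (Suc i') \<le> Suc (cX (Suc i'))"
      using F1 F2 by auto
    have cm: "Suc i' \<in> X \<Longrightarrow> Suc i' \<in> Y \<Longrightarrow> p (Suc i')" using common by simp
    show "allowed (p i) (p (i-1)) (i\<in>X) (i\<in>Y)"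
      unfolding i' using incX incY f cm
      by (cases "Suc i' \<in> X"; cases "Suc i' \<in> Y") (auto simp: allowed_def p_def)
  qed
  have Tval: "Tm beta u M X Y True False = (\<Prod>i=1..M. Lent beta u (p i) (p (i-1)) (i\<in>X) (i\<in>Y))"
    using path_val[OF p0 allowed_all, of beta u] pM by simp
  also have "\<dots> = (\<Prod>i=1..M. (if i\<in>X \<and> i\<in>Y then - u / beta else 1) * (if i\<notin>X \<and> i\<notin>Y then u else 1)
           * (if i\<notin>X \<and> i\<notin>Y \<and> p i then z else 1))"
    by (rule prod.cong[OF refl]) (use Lent_decomp[OF _ u] allowed_all in \<open>auto simp: z_def\<close>)
  also have "\<dots> = (- u / beta) ^ card {i\<in>{1..M}. i\<in>X \<and> i\<in>Y} * u ^ card {i\<in>{1..M}. i\<notin>X \<and> i\<notin>Y}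
      * z ^ card {i\<in>{1..M}. i\<notin>X \<and> i\<notin>Y \<and> p i}"
    by (simp add: prod.distrib prod_if_one)
  finally have T1: "Tm beta u M X Y True False = (- u / beta) ^ card {i\<in>{1..M}. i\<in>X \<and> i\<in>Y} * u ^ card {i\<in>{1..M}. i\<notin>X \<and> i\<notin>Y}
      * z ^ card {i\<in>{1..M}. i\<notin>X \<and> i\<notin>Y \<and> p i}" .
  have XY: "X \<inter> Y = x ` {j\<in>{1..N}. x j = y (j+1)}"
  proof
    show "X \<inter> Y \<subseteq> x ` {j\<in>{1..N}. x j = y (j+1)}"
    proof
      fix i assume "i \<in> X \<inter> Y"
      then have "i \<in> X" "i \<in> Y" by auto
      obtain j where j: "j \<in> {1..N}" "i = x j" using \<open>i \<in> X\<close> unfolding X_def by blast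
      obtain k where k: "k \<in> {1..N+1}" "i = y k" using \<open>i \<in> Y\<close> unfolding Y_def by blast
      have jk: "j \<in> {1..N}" "k \<in> {1..N+1}" "i = x j" "i = y k" using j k by auto
      then have "k = j+1" using match by simp
      then show "i \<in> x ` {j\<in>{1..N}. x j = y (j+1)}" using jk by (intro image_eqI[where x=j]) auto
    qed
    show "x ` {j\<in>{1..N}. x j = y (j+1)} \<subseteq> X \<inter> Y"
    proof
      fix i assume "i \<in> x ` {j\<in>{1..N}. x j = y (j+1)}"
      then obtain j where j: "j \<in> {1..N}" "x j = y (j+1)" "i = x j" by auto
      then have "j + 1 \<in> {1..N+1}" by auto
      then show "i \<in> X \<inter> Y" using j unfolding X_def Y_def by (metis IntI image_eqI)
    qed
  qed
  have cXY: "card (X \<inter> Y) = C"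
  proof -
    have "card (x ` {j\<in>{1..N}. x j = y (j+1)}) = card {j\<in>{1..N}. x j = y (j+1)}"
      by (rule card_image[OF inj_on_subset[OF injx]]) auto
    then show ?thesis unfolding C_def XY .
  qed
  have eC: "{i\<in>{1..M}. i\<in>X \<and> i\<in>Y} = X \<inter> Y" using XM by auto
  have cC: "card {i\<in>{1..M}. i\<in>X \<and> i\<in>Y} = C" unfolding eC by (rule cXY)
  have cardX: "card X = N" unfolding X_def using card_image[OF injx] by simp
  have cardY: "card Y = N + 1" unfolding Y_def using card_image[OF injy] by simp
  have finXY: "finite X" "finite Y" by (auto simp: X_def Y_def)
  have cUI: "card X + card Y = card (X \<union> Y) + card (X \<inter> Y)" by (rule card_Un_Int[OF finXY])
  define A where "A = card {i\<in>{1..M}. i\<notin>X \<and> i\<notin>Y}"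
  have Aeq: "A + 2*N + 1 = M + C"
  proof -
    have "{i\<in>{1..M}. i\<notin>X \<and> i\<notin>Y} = {1..M} - (X \<union> Y)" by auto
    then have "A = M - card (X \<union> Y)" unfolding A_def using XM YM finXY
      by (simp add: card_Diff_subset)
    moreover have "card (X \<union> Y) \<le> M" using XM YM by (metis card_atLeastAtMost card_mono diff_Suc_1 finite_atLeastAtMost le_sup_iff)
    ultimately show ?thesis using cUI cardX cardY cXY by simp
  qed
  define B where "B = card {i\<in>{1..M}. i\<notin>X \<and> i\<notin>Y \<and> p i}"
  have pY: "p i" if iY: "i \<in> Y" for i
  proof (cases "i \<in> X")
    case True then show ?thesis using common iY by simp
  next
    case False
    have "i \<in> {1..M}" using iY YM by auto
    then have "allowed (p i) (p (i-1)) (i\<in>X) (i\<in>Y)" using allowed_all by blast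
    then show ?thesis using False iY by (simp add: allowed_def)
  qed
  have pX: "\<not> p i" if iX: "i \<in> X" and iY: "i \<notin> Y" for i
  proof -
    have "i \<in> {1..M}" using iX XM by auto
    then have "allowed (p i) (p (i-1)) (i\<in>X) (i\<in>Y)" using allowed_all by blast
    then show ?thesis using iX iY by (simp add: allowed_def)
  qed
  have Pset: "{1..M} \<inter> {i. p i} = {i\<in>{1..M}. i\<notin>X \<and> i\<notin>Y \<and> p i} \<union> Y"
    using pY pX YM by auto
  have cP: "card ({1..M} \<inter> {i. p i}) = B + (N + 1)"
    unfolding Pset B_def cardY[symmetric] by (rule card_Un_disjoint) (use finXY in auto)
  have pb: "(of_bool (p i) :: nat) = cY i - cX i" for i
    using F1[of i] F2[of i] by (auto simp: p_def)
  have "(\<Sum>i\<in>{1..M}. (of_bool (p i) :: nat)) = card ({1..M} \<inter> {i. p i})" by simp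
  also have "(\<Sum>i\<in>{1..M}. (of_bool (p i) :: nat)) = (\<Sum>i\<in>{1..M}. cY i) - (\<Sum>i\<in>{1..M}. cX i)"
    unfolding pb by (rule sum_subtractf_nat) (rule F1)
  finally have cP2: "(\<Sum>i\<in>{1..M}. cY i) - (\<Sum>i\<in>{1..M}. cX i) = B + (N+1)" using cP by simp
  have smono: "(\<Sum>i\<in>{1..M}. cX i) \<le> (\<Sum>i\<in>{1..M}. cY i)" by (rule sum_mono) (rule F1)
  have sY: "(\<Sum>i\<in>{1..M}. cY i) = (\<Sum>j\<in>{1..N+1}. M + 1 - y j)"
    unfolding cY_def by (rule sum_card_below) (use yb in auto)
  have sX: "(\<Sum>i\<in>{1..M}. cX i) = (\<Sum>j\<in>{1..N}. M + 1 - x j)"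
    unfolding cX_def by (rule sum_card_below) (use xb in auto)
  have iY: "int (\<Sum>j\<in>{1..N+1}. M + 1 - y j) = (int N + 1) * (int M + 1) - (\<Sum>j\<in>{1..N+1}. int (y j))"
  proof -
    have "int (\<Sum>j\<in>{1..N+1}. M + 1 - y j) = (\<Sum>j\<in>{1..N+1}. (int M + 1) - int (y j))"
      unfolding of_nat_sum
    proof (rule sum.cong[OF refl])
      fix j assume "j \<in> {1..N+1}"
      then have "y j \<le> M" using yb by auto
      then show "int (M + 1 - y j) = int M + 1 - int (y j)" by simp
    qed
    also have "\<dots> = (int N + 1) * (int M + 1) - (\<Sum>j\<in>{1..N+1}. int (y j))"
      by (simp add: sum_subtractf)
    finally show ?thesis .
  qed
  have iX: "int (\<Sum>j\<in>{1..N}. M + 1 - x j) = int N * (int M + 1) - (\<Sum>j\<in>{1..N}. int (x j))"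
  proof -
    have "int (\<Sum>j\<in>{1..N}. M + 1 - x j) = (\<Sum>j\<in>{1..N}. (int M + 1) - int (x j))"
      unfolding of_nat_sum
    proof (rule sum.cong[OF refl])
      fix j assume "j \<in> {1..N}"
      then have "x j \<le> M" using xb by auto
      then show "int (M + 1 - x j) = int M + 1 - int (x j)" by simp
    qed
    also have "\<dots> = int N * (int M + 1) - (\<Sum>j\<in>{1..N}. int (x j))"
      by (simp add: sum_subtractf)
    finally show ?thesis .
  qed
  have Beq: "int B + int N + (\<Sum>j\<in>{1..N+1}. int (y j)) = int M + (\<Sum>j\<in>{1..N}. int (x j))"
  proof -
    have "int B + int N + 1 = int (\<Sum>i\<in>{1..M}. cY i) - int (\<Sum>i\<in>{1..M}. cX i)"
      using cP2 smono by linarith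
    then show ?thesis unfolding sY sX iY iX by (simp add: algebra_simps)
  qed
  have Tf: "Tm beta u M X Y True False = (-u/beta)^C * u^A * z^B"
    using T1 unfolding cC A_def[symmetric] B_def[symmetric] .
  have "A + 2*N + 1 = M + C \<and> int B + int N + (\<Sum>j\<in>{1..N+1}. int (y j)) = int M + (\<Sum>j\<in>{1..N}. int (x j))
     \<and> Tm beta u M X Y True False = (-u/beta)^C * u^A * z^B" using Aeq Beq Tf by blast
  then show ?thesis unfolding X_def Y_def C_def z_def by blast
qed



lemma alg:
  fixes u beta :: complex
  assumes u: "u \<noteq> 0" and b: "beta \<noteq> 0" and e: "A + 2*N + 1 = M + C" and c: "C \<le> N"
  shows "(- beta) ^ N * u powi (1 - int M) * ((- u / beta) ^ C * u ^ A) = (1 + beta * (- inverse beta - inverse (u^2))) ^ (N - C)"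
proof -
  obtain K where K: "N = C + K" using c le_Suc_ex by blast
  have M: "M = A + C + 2*K + 1" using e K by simp
  have p: "u powi (1 - int M) = inverse (u ^ (A + C + 2*K))"
  proof -
    have "1 - int M = - int (A + C + 2*K)" using M by simp
    then have "u powi (1 - int M) = u powi (- int (A + C + 2*K))" by (simp only:)
    also have "\<dots> = inverse (u ^ (A + C + 2*K))" by (simp only: power_int_minus power_int_of_nat)
    finally show ?thesis .
  qed
  have q: "1 + beta * (- inverse beta - inverse (u^2)) = - beta * inverse (u^2)"
    using b by (simp add: algebra_simps)
  have r: "(- beta) ^ C * (- u / beta) ^ C = u ^ C"
    using b by (simp add: power_mult_distrib[symmetric])
  have "(- beta) ^ N * u powi (1 - int M) * ((- u / beta) ^ C * u ^ A)
     = ((- beta) ^ C * (- u / beta) ^ C) * (- beta) ^ K * u ^ A * inverse (u ^ (A + C + 2*K))"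
    unfolding K p by (simp add: power_add algebra_simps)
  also have "\<dots> = (- beta) ^ K * (u ^ (A + C) * inverse (u ^ (A + C) * u ^ (2*K)))"
    unfolding r by (simp add: power_add algebra_simps)
  also have "\<dots> = (- beta) ^ K * inverse (u ^ (2*K))"
    using u by (simp add: inverse_mult_distrib)
  also have "\<dots> = (- beta * inverse (u^2)) ^ K"
    by (simp only: power_mult_distrib power_mult power_inverse)
  finally show ?thesis unfolding q using K by simp
qed

lemma antimono_int:
  fixes f :: "nat \<Rightarrow> int"
  assumes "\<forall>j\<in>{1..<n}. f j \<ge> f (j+1)" "1 \<le> a" "a \<le> b" "b \<le> n"
  shows "f b \<le> f a"
proof -
  have H: "a + d \<le> n \<Longrightarrow> f (a + d) \<le> f a" for d
  proof (induction d)
    case 0 then show ?case by simp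
  next
    case (Suc d)
    have "f (a + Suc d) \<le> f (a + d)" using assms Suc.prems by auto
    then show ?case using Suc by simp
  qed
  have "f (a + (b - a)) \<le> f a" by (rule H) (use assms in simp)
  then show ?thesis using assms by simp
qed

lemma part2:
  fixes beta u :: complex and M N :: nat and lam mu :: "nat \<Rightarrow> int"
  assumes beta: "beta \<noteq> 0" and M: "M \<ge> 1" and N: "N \<le> M - 1"
    and h: "int M - int N \<ge> lam 1 \<and> (\<forall>j\<in>{1..<N}. lam j \<ge> lam (j+1)) \<and>
       (\<forall>j\<in>{1..N}. lam j \<ge> 0) \<and>
       int M - int N - 1 \<ge> mu 1 \<and> (\<forall>j\<in>{1..N}. mu j \<ge> mu (j+1)) \<and>
       (\<forall>j\<in>{1..N+1}. mu j \<ge> 0) \<and> u \<noteq> 0"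
  shows "(- beta) ^ N * u powi (1 - int M) *
         Cel beta M u ((\<lambda>j. nat (lam (N + 1 - j) + int j)) ` {1..N})
                      ((\<lambda>j. nat (mu (N + 2 - j) + int j)) ` {1..N+1})
       = Gfun N (\<lambda>j. int M - int N - 1 - mu (N + 2 - j)) (\<lambda>j. int M - int N - lam (N + 1 - j))
              (- inverse beta - inverse (u ^ 2)) beta"
proof -
  define x where "x j = nat (lam (N + 1 - j) + int j)" for j
  define y where "y j = nat (mu (N + 2 - j) + int j)" for j
  define z where "z = - inverse beta - inverse (u ^ 2)"
  have l1: "int M - int N \<ge> lam 1" and lm: "\<forall>j\<in>{1..<N}. lam j \<ge> lam (j+1)"
    and l0: "\<forall>j\<in>{1..N}. lam j \<ge> 0" and m1: "int M - int N - 1 \<ge> mu 1"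
    and mm: "\<forall>j\<in>{1..<N+1}. mu j \<ge> mu (j+1)" and m0: "\<forall>j\<in>{1..N+1}. mu j \<ge> 0" and u: "u \<noteq> 0"
    using h by auto
  have ix: "int (x j) = lam (N + 1 - j) + int j" if "j \<in> {1..N}" for j
  proof -
    have "N+1-j \<in> {1..N}" using that by auto
    then have "lam (N+1-j) \<ge> 0" using l0 by blast
    then show ?thesis by (simp add: x_def)
  qed
  have iy: "int (y j) = mu (N + 2 - j) + int j" if "j \<in> {1..N+1}" for j
  proof -
    have "N+2-j \<in> {1..N+1}" using that by auto
    then have "mu (N+2-j) \<ge> 0" using m0 by blast
    then show ?thesis by (simp add: y_def)
  qed
  have xm: "\<forall>j\<in>{1..<N}. x j < x (j+1)"
  proof
    fix j assume j: "j \<in> {1..<N}"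
    have "N - j \<in> {1..<N}" using j by auto
    then have "lam (N - j) \<ge> lam (N - j + 1)" using lm by blast
    moreover have "N - j + 1 = N + 1 - j" "N + 1 - (j+1) = N - j" using j by auto
    ultimately have "lam (N + 1 - (j+1)) \<ge> lam (N + 1 - j)" by simp
    moreover have "j \<in> {1..N}" "j + 1 \<in> {1..N}" using j by auto
    ultimately have "int (x j) < int (x (j+1))" using ix[of j] ix[of "j+1"] by simp
    then show "x j < x (j+1)" by simp
  qed
  have ym: "\<forall>j\<in>{1..<N+1}. y j < y (j+1)"
  proof
    fix j assume j: "j \<in> {1..<N+1}"
    have "N + 1 - j \<in> {1..<N+1}" using j by auto
    then have "mu (N + 1 - j) \<ge> mu (N + 1 - j + 1)" using mm by blast
    moreover have "N + 1 - j + 1 = N + 2 - j" "N + 2 - (j+1) = N + 1 - j" using j by auto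
    ultimately have "mu (N + 2 - (j+1)) \<ge> mu (N + 2 - j)" by simp
    moreover have "j \<in> {1..N+1}" "j + 1 \<in> {1..N+1}" using j by auto
    ultimately have "int (y j) < int (y (j+1))" using iy[of j] iy[of "j+1"] by simp
    then show "y j < y (j+1)" by simp
  qed
  have xb: "\<forall>j\<in>{1..N}. 1 \<le> x j \<and> x j \<le> M"
  proof
    fix j assume j: "j \<in> {1..N}"
    have "N+1-j \<in> {1..N}" using j by auto
    then have "lam (N+1-j) \<ge> 0" "lam (N+1-j) \<le> lam 1" using l0 antimono_int[OF lm, of 1 "N+1-j"] by auto
    then have "1 \<le> int (x j) \<and> int (x j) \<le> int M" using ix[OF j] l1 j N M by auto
    then show "1 \<le> x j \<and> x j \<le> M" by linarith
  qed
  have yb: "\<forall>j\<in>{1..N+1}. 1 \<le> y j \<and> y j \<le> M"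
  proof
    fix j assume j: "j \<in> {1..N+1}"
    have "N+2-j \<in> {1..N+1}" using j by auto
    then have "mu (N+2-j) \<ge> 0" "mu (N+2-j) \<le> mu 1" using m0 antimono_int[OF mm, of 1 "N+2-j"] by auto
    then have "1 \<le> int (y j) \<and> int (y j) \<le> int M" using iy[OF j] m1 j N M by auto
    then show "1 \<le> y j \<and> y j \<le> M" by linarith
  qed
  define muv where "muv j = int M - int N - 1 - mu (N + 2 - j)" for j
  define lamv where "lamv j = int M - int N - lam (N + 1 - j)" for j
  have muv1: "muv j = int M - int N - 1 + int j - int (y j)" if "j \<in> {1..N+1}" for j
    using iy[OF that] by (simp add: muv_def)
  have lamv1: "lamv j = int M - int N + int j - int (x j)" if "j \<in> {1..N}" for j
    using ix[OF that] by (simp add: lamv_def)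
  have cond: "(\<forall>j\<in>{1..N}. muv j \<ge> lamv j \<and> lamv j \<ge> muv (j+1)) \<longleftrightarrow>
      (\<forall>j\<in>{1..N}. y j < x j \<and> x j \<le> y (j+1))"
  proof -
    have "(muv j \<ge> lamv j \<and> lamv j \<ge> muv (j+1)) \<longleftrightarrow> (y j < x j \<and> x j \<le> y (j+1))" if j: "j \<in> {1..N}" for j
    proof -
      have "j \<in> {1..N+1}" "j+1 \<in> {1..N+1}" using j by auto
      then show ?thesis using muv1[of j] muv1[of "j+1"] lamv1[OF j] by auto
    qed
    then show ?thesis by blast
  qed
  have eqv: "(muv (j+1) = lamv j) \<longleftrightarrow> (x j = y (j+1))" if j: "j \<in> {1..N}" for j
  proof -
    have "j+1 \<in> {1..N+1}" using j by auto
    then show ?thesis using muv1[of "j+1"] lamv1[OF j] by auto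
  qed
  have Cel_eq: "Cel beta M u ((\<lambda>j. nat (lam (N + 1 - j) + int j)) ` {1..N})
                      ((\<lambda>j. nat (mu (N + 2 - j) + int j)) ` {1..N+1}) = Tm beta u M (x ` {1..N}) (y ` {1..N+1}) True False"
    unfolding Cel_def x_def y_def ..
  have G_eq: "Gfun N (\<lambda>j. int M - int N - 1 - mu (N + 2 - j)) (\<lambda>j. int M - int N - lam (N + 1 - j)) z beta
     = Gfun N muv lamv z beta" unfolding muv_def lamv_def ..
  show ?thesis
  proof (cases "\<forall>j\<in>{1..N}. y j < x j \<and> x j \<le> y (j+1)")
    case False
    have "Tm beta u M (x ` {1..N}) (y ` {1..N+1}) True False = 0"
      by (rule core_zero[OF xm ym xb yb False])
    moreover have "Gfun N muv lamv z beta = 0"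
    proof -
      have nc: "\<not> (\<forall>j\<in>{1..N}. muv j \<ge> lamv j \<and> lamv j \<ge> muv (j+1))" using False cond by blast
      show ?thesis unfolding Gfun_def by (rule if_not_P[OF nc])
    qed
    ultimately show ?thesis using Cel_eq G_eq unfolding z_def by simp
  next
    case True
    define C where "C = card {j\<in>{1..N}. x j = y (j+1)}"
    obtain A B where AB: "A + 2*N + 1 = M + C"
      "int B + int N + (\<Sum>j\<in>{1..N+1}. int (y j)) = int M + (\<Sum>j\<in>{1..N}. int (x j))"
      "Tm beta u M (x ` {1..N}) (y ` {1..N+1}) True False = (- u / beta) ^ C * u ^ A * z ^ B"
      using core_val[OF xm ym xb yb True u, of beta] unfolding C_def z_def by blast
    have Cle: "C \<le> N"
    proof -
      have "C \<le> card {1..N}" unfolding C_def by (rule card_mono) auto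
      then show ?thesis by simp
    qed
    have s1: "(\<Sum>j=1..N+1. muv j) = (\<Sum>j=1..N+1. int M - int N - 1 + int j - int (y j))"
      by (rule sum.cong[OF refl]) (rule muv1)
    have s2: "(\<Sum>j=1..N. lamv j) = (\<Sum>j=1..N. int M - int N + int j - int (x j))"
      by (rule sum.cong[OF refl]) (rule lamv1)
    have s3: "(\<Sum>j=1..N+1. int M - int N - 1 + int j - int (y j)) =
       (\<Sum>j=1..N. int M - int N - 1 + int j - int (y j)) + (int M - int N - 1 + int (N+1) - int (y (N+1)))"
      by simp
    have s4: "(\<Sum>j=1..N+1. int (y j)) = (\<Sum>j=1..N. int (y j)) + int (y (N+1))" by simp
    have s5: "(\<Sum>j=1..N. int M - int N - 1 + int j - int (y j)) - (\<Sum>j=1..N. int M - int N + int j - int (x j))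
       = (\<Sum>j=1..N. int (x j)) - (\<Sum>j=1..N. int (y j)) - int N"
    proof -
      have "(\<Sum>j=1..N. int M - int N - 1 + int j - int (y j)) - (\<Sum>j=1..N. int M - int N + int j - int (x j))
          = (\<Sum>j=1..N. (int M - int N - 1 + int j - int (y j)) - (int M - int N + int j - int (x j)))"
        by (rule sum_subtractf[symmetric])
      also have "\<dots> = (\<Sum>j=1..N. int (x j) - int (y j) - 1)" by (rule sum.cong) auto
      also have "\<dots> = (\<Sum>j=1..N. int (x j)) - (\<Sum>j=1..N. int (y j)) - int N"
        by (simp add: sum_subtractf sum.distrib)
      finally show ?thesis .
    qed
    have sumeq: "(\<Sum>j=1..N+1. muv j) - (\<Sum>j=1..N. lamv j) = int B"
      using s1 s2 s3 s4 s5 AB(2) by simp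
    have cardsplit: "card {j\<in>{1..N}. x j \<noteq> y (j+1)} = N - C"
    proof -
      have e: "{1..N} = {j\<in>{1..N}. x j = y (j+1)} \<union> {j\<in>{1..N}. x j \<noteq> y (j+1)}" by auto
      have e2: "card {1..N} = card ({j\<in>{1..N}. x j = y (j+1)} \<union> {j\<in>{1..N}. x j \<noteq> y (j+1)})"
        using e by (rule arg_cong)
      have "card ({j\<in>{1..N}. x j = y (j+1)} \<union> {j\<in>{1..N}. x j \<noteq> y (j+1)})
          = card {j\<in>{1..N}. x j = y (j+1)} + card {j\<in>{1..N}. x j \<noteq> y (j+1)}"
        by (rule card_Un_disjoint) auto
      then have "card {1..N} = C + card {j\<in>{1..N}. x j \<noteq> y (j+1)}"
        unfolding C_def e2 .
      then show ?thesis by simp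
    qed
    have prodeq: "(\<Prod>j=1..N. 1 + beta * z - beta * z * (if muv (j+1) = lamv j then 1 else 0)) = (1 + beta * z) ^ (N - C)"
    proof -
      have "(\<Prod>j=1..N. 1 + beta * z - beta * z * (if muv (j+1) = lamv j then 1 else 0))
          = (\<Prod>j=1..N. if x j \<noteq> y (j+1) then 1 + beta * z else 1)"
        by (rule prod.cong[OF refl]) (use eqv in auto)
      also have "\<dots> = (1 + beta * z) ^ card {j\<in>{1..N}. x j \<noteq> y (j+1)}" by (rule prod_if_one) simp
      finally show ?thesis unfolding cardsplit .
    qed
    have cnd: "\<forall>j\<in>{1..N}. muv j \<ge> lamv j \<and> lamv j \<ge> muv (j+1)" using True cond by blast
    have G: "Gfun N muv lamv z beta = z ^ B * (1 + beta * z) ^ (N - C)"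
      unfolding Gfun_def if_P[OF cnd] sumeq prodeq by simp
    have "(- beta) ^ N * u powi (1 - int M) * Tm beta u M (x ` {1..N}) (y ` {1..N+1}) True False
        = z ^ B * ((- beta) ^ N * u powi (1 - int M) * ((- u / beta) ^ C * u ^ A))"
      unfolding AB(3) by (simp add: algebra_simps)
    also have "\<dots> = z ^ B * (1 + beta * z) ^ (N - C)"
      unfolding alg[OF u beta AB(1) Cle] z_def ..
    finally show ?thesis using Cel_eq G_eq G unfolding z_def by simp
  qed
qed


theorem mainTheorem5:
  fixes beta :: complex and M N :: nat
  assumes beta: "beta \<noteq> 0" and M: "M \<ge> 1" and N: "N \<le> M - 1"
  shows
   "(\<forall>(x::nat\<Rightarrow>nat) (y::nat\<Rightarrow>nat) (u::complex).
       (\<forall>j\<in>{1..N}. 1 \<le> x j \<and> x j \<le> M) \<and> (\<forall>j\<in>{1..<N}. x j < x (j+1)) \<and>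
       (\<forall>j\<in>{1..N+1}. 1 \<le> y j \<and> y j \<le> M) \<and> (\<forall>j\<in>{1..N}. y j < y (j+1)) \<and>
       u \<noteq> 0 \<longrightarrow>
       Cel beta M u ((\<lambda>j. M + 1 - x (N + 1 - j)) ` {1..N})
                    ((\<lambda>j. M + 1 - y (N + 2 - j)) ` {1..N+1})
       = Bel beta M u (y ` {1..N+1}) (x ` {1..N}))
  \<and>
   (\<forall>(lam::nat\<Rightarrow>int) (mu::nat\<Rightarrow>int) (u::complex).
       int M - int N \<ge> lam 1 \<and> (\<forall>j\<in>{1..<N}. lam j \<ge> lam (j+1)) \<and>
       (\<forall>j\<in>{1..N}. lam j \<ge> 0) \<and>
       int M - int N - 1 \<ge> mu 1 \<and> (\<forall>j\<in>{1..N}. mu j \<ge> mu (j+1)) \<and>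
       (\<forall>j\<in>{1..N+1}. mu j \<ge> 0) \<and>
       u \<noteq> 0 \<longrightarrow>
       (- beta) ^ N * u powi (1 - int M) *
         Cel beta M u ((\<lambda>j. nat (lam (N + 1 - j) + int j)) ` {1..N})
                      ((\<lambda>j. nat (mu (N + 2 - j) + int j)) ` {1..N+1})
       = Gfun N (\<lambda>j. int M - int N - 1 - mu (N + 2 - j)) (\<lambda>j. int M - int N - lam (N + 1 - j))
              (- inverse beta - inverse (u ^ 2)) beta)"
  proof (intro conjI allI impI)
  fix x y :: "nat \<Rightarrow> nat" and u :: complex
  assume H: "(\<forall>j\<in>{1..N}. 1 \<le> x j \<and> x j \<le> M) \<and> (\<forall>j\<in>{1..<N}. x j < x (j+1)) \<and>
       (\<forall>j\<in>{1..N+1}. 1 \<le> y j \<and> y j \<le> M) \<and> (\<forall>j\<in>{1..N}. y j < y (j+1)) \<and> u \<noteq> 0"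
  then show "Cel beta M u ((\<lambda>j. M + 1 - x (N + 1 - j)) ` {1..N})
                    ((\<lambda>j. M + 1 - y (N + 2 - j)) ` {1..N+1})
       = Bel beta M u (y ` {1..N+1}) (x ` {1..N})" by (intro part1) auto
next
  fix lam mu :: "nat \<Rightarrow> int" and u :: complex
  assume H: "int M - int N \<ge> lam 1 \<and> (\<forall>j\<in>{1..<N}. lam j \<ge> lam (j+1)) \<and>
       (\<forall>j\<in>{1..N}. lam j \<ge> 0) \<and>
       int M - int N - 1 \<ge> mu 1 \<and> (\<forall>j\<in>{1..N}. mu j \<ge> mu (j+1)) \<and>
       (\<forall>j\<in>{1..N+1}. mu j \<ge> 0) \<and> u \<noteq> 0"
  show "(- beta) ^ N * u powi (1 - int M) *
         Cel beta M u ((\<lambda>j. nat (lam (N + 1 - j) + int j)) ` {1..N})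
                      ((\<lambda>j. nat (mu (N + 2 - j) + int j)) ` {1..N+1})
       = Gfun N (\<lambda>j. int M - int N - 1 - mu (N + 2 - j)) (\<lambda>j. int M - int N - lam (N + 1 - j))
              (- inverse beta - inverse (u ^ 2)) beta"
    by (rule part2[OF beta M N H])
qed

end
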